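(* Let $n = p^l$ where $p$ is prime and $l$ is a positive integer, and let $G$ be a subgroup of $U(n)$. Then for every $\vec v \in S(n)$, $\lambda(G)$ divides $\#\mathrm{Orb}(G;\vec v)$.
   Context: $U(n)$ is the group (under matrix multiplication) of $2\times 2$ matrices $\begin{bmatrix} a & b \\ 0 & 1\end{bmatrix}$ with $a \in (\mathbb{Z}/n\mathbb{Z})^\times$ and $b \in \mathbb{Z}/n\mathbb{Z}$. $S(n)$ is the set of column vectors $\begin{bmatrix} j \\ 1\end{bmatrix}$ with $j \in \mathbb{Z}/n\mathbb{Z}$, on which $U(n)$ acts by matrix–vector multiplication: $\begin{bmatrix} a & b \\ 0 & 1\end{bmatrix}\begin{bmatrix} j \\ 1\end{bmatrix} = \begin{bmatrix} aj+b \\ 1\end{bmatrix}$. $\mathrm{Orb}(G;\vec v)$ is the orbit of $\vec v$ under $G$, and $\#X$ is the cardinality of $X$. $\lambda(G)$ is the minimum of $\#\mathrm{Orb}(G;\vec v)$ over $\vec v \in S(n)$. *)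

theory Defs
  imports "HOL-Algebra.Group" "HOL-Computational_Algebra.Primes"
begin

text \<open>Elements of Z/nZ are represented by their residues in {0..<n}.
  The matrix [[a,b],[0,1]] is represented by the pair (a,b).
  Matrix product [[a,b],[0,1]][[c,d],[0,1]] = [[ac, ad+b],[0,1]].\<close>

definition Ugrp :: "nat \<Rightarrow> (nat \<times> nat) monoid" where
  "Ugrp n = \<lparr> carrier = {(a, b). a < n \<and> b < n \<and> coprime a n},
              monoid.mult = (\<lambda>(a, b) (c, d). ((a * c) mod n, (a * d + b) mod n)),
              monoid.one = (1 mod n, 0) \<rparr>"

text \<open>S(n): the column vector [j,1] is represented by j in {0..<n}.\<close>
definition Sn :: "nat \<Rightarrow> nat set" where
  "Sn n = {0..<n}"

definition act :: "nat \<Rightarrow> nat \<times> nat \<Rightarrow> nat \<Rightarrow> nat" where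
  "act n g j = (fst g * j + snd g) mod n"

definition Orb :: "nat \<Rightarrow> (nat \<times> nat) set \<Rightarrow> nat \<Rightarrow> nat set" where
  "Orb n G v = (\<lambda>g. act n g v) ` G"

definition lam :: "nat \<Rightarrow> (nat \<times> nat) set \<Rightarrow> nat" where
  "lam n G = Min ((\<lambda>v. card (Orb n G v)) ` Sn n)"

end

theory Submission
  imports Defs "HOL-Algebra.Group_Action"
begin

lemma U_carrier: "carrier (Ugrp n) = {(a, b). a < n \<and> b < n \<and> coprime a n}"
  by (simp add: Ugrp_def)
lemma U_mult: "(a,b) \<otimes>\<^bsub>Ugrp n\<^esub> (c,d) = ((a * c) mod n, (a * d + b) mod n)"
  by (simp add: Ugrp_def)
lemma U_mult': "x \<otimes>\<^bsub>Ugrp n\<^esub> y = ((fst x * fst y) mod n, (fst x * snd y + snd x) mod n)"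
  by (cases x; cases y) (simp add: Ugrp_def)
lemma U_one: "\<one>\<^bsub>Ugrp n\<^esub> = (1 mod n, 0)"
  by (simp add: Ugrp_def)

lemma modlem: "(s + (f * t + j * (f * g mod n))) mod n = (s + f * ((t + j * g) mod n)) mod (n::nat)"
proof -
  have 1: "j * (f * g mod n) mod n = j * (f * g) mod n" by (rule mod_mult_right_eq)
  have "(s + (f * t + j * (f * g mod n))) mod n = (s + (f * t + j * (f * g))) mod n"
    by (rule mod_add_cong[OF refl mod_add_cong[OF refl 1]])
  moreover have "f * ((t + j * g) mod n) mod n = f * (t + j * g) mod n" by (rule mod_mult_right_eq)
  then have "(s + f * ((t + j * g) mod n)) mod n = (s + f * (t + j * g)) mod n"
    by (rule mod_add_cong[OF refl])
  ultimately show ?thesis by (simp add: algebra_simps)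
qed

lemma act_mult: "act n (x \<otimes>\<^bsub>Ugrp n\<^esub> y) j = act n x (act n y j)"
  unfolding act_def U_mult' using modlem by (simp add: mod_simps algebra_simps)

lemma modinv: assumes "coprime a (n::nat)" "n \<ge> 2" shows "\<exists>w. (a * w) mod n = 1"
proof -
  have a0: "a \<noteq> 0" by (rule ccontr) (use assms in auto)
  obtain x y where "a * x = n * y + gcd a n" using bezout_nat[OF a0] by blast
  then have "a * x = n * y + 1" using assms by simp
  then have "(a * x) mod n = (1 + n * y) mod n" by simp
  also have "\<dots> = (1 + (n * y) mod n) mod n" by (rule mod_add_right_eq[symmetric])
  also have "\<dots> = 1" using assms by simp
  finally have "(a * x) mod n = 1" .
  then show ?thesis by blast
qed

lemma U_group: assumes "n \<ge> 2" shows "group (Ugrp n)"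
proof (rule groupI)
  fix x y assume "x \<in> carrier (Ugrp n)" "y \<in> carrier (Ugrp n)"
  then show "x \<otimes>\<^bsub>Ugrp n\<^esub> y \<in> carrier (Ugrp n)"
    using assms by (auto simp: U_carrier U_mult')
next
  show "\<one>\<^bsub>Ugrp n\<^esub> \<in> carrier (Ugrp n)" using assms by (simp add: U_carrier U_one)
next
  fix x y z
  show "x \<otimes>\<^bsub>Ugrp n\<^esub> y \<otimes>\<^bsub>Ugrp n\<^esub> z = x \<otimes>\<^bsub>Ugrp n\<^esub> (y \<otimes>\<^bsub>Ugrp n\<^esub> z)"
    unfolding U_mult' using modlem by (simp add: mod_simps algebra_simps)
next
  fix x assume "x \<in> carrier (Ugrp n)"
  then show "\<one>\<^bsub>Ugrp n\<^esub> \<otimes>\<^bsub>Ugrp n\<^esub> x = x"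
    using assms by (auto simp: U_carrier U_mult' U_one)
next
  fix x assume x: "x \<in> carrier (Ugrp n)"
  obtain a b where ab: "x = (a,b)" "a < n" "b < n" "coprime a n" using x by (auto simp: U_carrier)
  obtain w where w: "(a * w) mod n = 1" using modinv ab(4) assms by blast
  define w' where "w' = w mod n"
  have w': "(w' * a) mod n = 1" using w assms unfolding w'_def
    by (simp add: mod_simps mult.commute)
  have cw: "coprime w' n"
    by (metis w' assms coprime_1_left coprime_mod_left_iff coprime_mult_left_iff not_numeral_le_zero)
  define y where "y = (w', (n - (w' * b) mod n) mod n)"
  have "y \<in> carrier (Ugrp n)" using cw assms by (auto simp: y_def U_carrier w'_def)
  moreover have "y \<otimes>\<^bsub>Ugrp n\<^esub> x = \<one>\<^bsub>Ugrp n\<^esub>"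
  proof -
    have "(w' * b + (n - w' * b mod n) mod n) mod n = 0"
      by (metis add.commute add_diff_inverse_nat mod_add_right_eq mod_le_divisor mod_self not_less assms
          le_less_trans zero_less_numeral mod_less_divisor)
    then show ?thesis using w' assms by (simp add: y_def ab U_mult U_one)
  qed
  ultimately show "\<exists>y\<in>carrier (Ugrp n). y \<otimes>\<^bsub>Ugrp n\<^esub> x = \<one>\<^bsub>Ugrp n\<^esub>" by blast
qed

lemma act_lt: "n > 0 \<Longrightarrow> act n g j < n" by (simp add: act_def)

lemma act_one: "j < n \<Longrightarrow> act n (\<one>\<^bsub>Ugrp n\<^esub>) j = j"
  by (cases "n = 1") (auto simp: act_def U_one)

context
  fixes n :: nat
  assumes n2: "n \<ge> 2"
begin

interpretation U: group "Ugrp n" using U_group[OF n2] .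

lemma n0: "0 < n" using n2 by simp

lemma inv_fst: "x \<in> carrier (Ugrp n) \<Longrightarrow> (fst x * fst (inv\<^bsub>Ugrp n\<^esub> x)) mod n = 1"
proof -
  assume x: "x \<in> carrier (Ugrp n)"
  have "x \<otimes>\<^bsub>Ugrp n\<^esub> inv\<^bsub>Ugrp n\<^esub> x = \<one>\<^bsub>Ugrp n\<^esub>" using x by simp
  then show ?thesis using n2 by (simp add: U_mult' U_one)
qed

lemma act_inv: "x \<in> carrier (Ugrp n) \<Longrightarrow> j < n \<Longrightarrow> act n (inv\<^bsub>Ugrp n\<^esub> x) (act n x j) = j"
  by (metis U.l_inv act_mult act_one)

lemma act_inv2: "x \<in> carrier (Ugrp n) \<Longrightarrow> j < n \<Longrightarrow> act n x (act n (inv\<^bsub>Ugrp n\<^esub> x) j) = j"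
  by (metis U.r_inv act_mult act_one)

lemma fst_lt: "x \<in> carrier (Ugrp n) \<Longrightarrow> fst x < n" by (auto simp: U_carrier)
lemma snd_lt: "x \<in> carrier (Ugrp n) \<Longrightarrow> snd x < n" by (auto simp: U_carrier)

definition phi :: "nat \<times> nat \<Rightarrow> nat \<Rightarrow> nat" where
  "phi g = (\<lambda>j\<in>{0..<n}. act n g j)"

lemma phi_Bij: "x \<in> carrier (Ugrp n) \<Longrightarrow> phi x \<in> Bij {0..<n}"
proof -
  assume x: "x \<in> carrier (Ugrp n)"
  have "bij_betw (act n x) {0..<n} {0..<n}"
  proof (rule bij_betw_byWitness[where f' = "act n (inv\<^bsub>Ugrp n\<^esub> x)"])
    show "\<forall>a\<in>{0..<n}. act n (inv\<^bsub>Ugrp n\<^esub> x) (act n x a) = a" using act_inv x by auto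
    show "\<forall>a'\<in>{0..<n}. act n x (act n (inv\<^bsub>Ugrp n\<^esub> x) a') = a'" using act_inv2 x by auto
    show "act n x ` {0..<n} \<subseteq> {0..<n}" by (auto intro!: act_lt[OF n0])
    show "act n (inv\<^bsub>Ugrp n\<^esub> x) ` {0..<n} \<subseteq> {0..<n}" by (auto intro!: act_lt[OF n0])
  qed
  then have "bij_betw (phi x) {0..<n} {0..<n}"
    unfolding phi_def by (rule bij_betw_cong[THEN iffD1, rotated]) auto
  then show ?thesis unfolding Bij_def phi_def by auto
qed

lemma action:
  assumes G: "subgroup G (Ugrp n)"
  shows "group_action (Ugrp n\<lparr>carrier := G\<rparr>) {0..<n} phi"
proof -
  have gG: "group (Ugrp n\<lparr>carrier := G\<rparr>)" using U.subgroup_imp_group[OF G] .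
  have "phi \<in> hom (Ugrp n\<lparr>carrier := G\<rparr>) (BijGroup {0..<n})"
  proof (rule homI)
    fix x assume "x \<in> carrier (Ugrp n\<lparr>carrier := G\<rparr>)"
    then have "x \<in> carrier (Ugrp n)" using subgroup.subset[OF G] by auto
    then show "phi x \<in> carrier (BijGroup {0..<n})" using phi_Bij by (simp add: BijGroup_def)
  next
    fix x y assume "x \<in> carrier (Ugrp n\<lparr>carrier := G\<rparr>)" "y \<in> carrier (Ugrp n\<lparr>carrier := G\<rparr>)"
    then have x: "x \<in> carrier (Ugrp n)" and y: "y \<in> carrier (Ugrp n)" using subgroup.subset[OF G] by auto
    have "phi (x \<otimes>\<^bsub>Ugrp n\<^esub> y) = compose {0..<n} (phi x) (phi y)"
      unfolding phi_def compose_def by (auto simp: act_mult fun_eq_iff intro!: act_lt[OF n0])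
    then show "phi (x \<otimes>\<^bsub>Ugrp n\<lparr>carrier := G\<rparr>\<^esub> y) = phi x \<otimes>\<^bsub>BijGroup {0..<n}\<^esub> phi y"
      using phi_Bij[OF x] phi_Bij[OF y] by (simp add: BijGroup_def)
  qed
  then show ?thesis
    unfolding group_action_def group_hom_def group_hom_axioms_def using gG group_BijGroup by auto
qed

lemma orbit_stab:
  assumes G: "subgroup G (Ugrp n)" and v: "v < n"
  shows "card (Orb n G v) * card {g \<in> G. act n g v = v} = card G"
proof -
  interpret A: group_action "Ugrp n\<lparr>carrier := G\<rparr>" "{0..<n}" phi using action[OF G] .
  have "card (orbit (Ugrp n\<lparr>carrier := G\<rparr>) phi v) * card (stabilizer (Ugrp n\<lparr>carrier := G\<rparr>) phi v)
     = order (Ugrp n\<lparr>carrier := G\<rparr>)" using A.orbit_stabilizer_theorem v by simp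
  moreover have "orbit (Ugrp n\<lparr>carrier := G\<rparr>) phi v = Orb n G v"
    using v by (auto simp: orbit_def Orb_def phi_def)
  moreover have "stabilizer (Ugrp n\<lparr>carrier := G\<rparr>) phi v = {g \<in> G. act n g v = v}"
    using v by (auto simp: stabilizer_def phi_def)
  ultimately show ?thesis by (simp add: order_def)
qed

lemma finite_U: "finite (carrier (Ugrp n))"
  by (rule finite_subset[of _ "{..<n} \<times> {..<n}"]) (auto simp: U_carrier)

lemma subgroup_dvd:
  assumes "subgroup I (Ugrp n)" "subgroup J (Ugrp n)" "I \<subseteq> J"
  shows "card I dvd card J"
proof -
  interpret J: group "Ugrp n\<lparr>carrier := J\<rparr>" using U.subgroup_imp_group[OF assms(2)] .
  have "subgroup I (Ugrp n\<lparr>carrier := J\<rparr>)" using U.subgroup_incl assms by blast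
  then have "card (rcosets\<^bsub>Ugrp n\<lparr>carrier := J\<rparr>\<^esub> I) * card I = order (Ugrp n\<lparr>carrier := J\<rparr>)"
    by (rule J.lagrange)
  then show ?thesis by (metis dvd_triv_right order_def partial_object.select_convs(1) partial_object.surjective partial_object.update_convs(1))
qed

lemma stab_subgroup:
  assumes G: "subgroup G (Ugrp n)" and c: "c < n"
  shows "subgroup {g \<in> G. act n g c = c} (Ugrp n)"
proof (rule U.subgroupI)
  show "{g \<in> G. act n g c = c} \<subseteq> carrier (Ugrp n)" using subgroup.subset[OF G] by auto
  have "\<one>\<^bsub>Ugrp n\<^esub> \<in> {g \<in> G. act n g c = c}" using subgroup.one_closed[OF G] act_one c by auto
  then show "{g \<in> G. act n g c = c} \<noteq> {}" by blast
next
  fix a assume a: "a \<in> {g \<in> G. act n g c = c}"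
  then have "a \<in> carrier (Ugrp n)" using subgroup.subset[OF G] by auto
  then have "act n (inv\<^bsub>Ugrp n\<^esub> a) c = c" using act_inv[of a c] a c by auto
  then show "inv\<^bsub>Ugrp n\<^esub> a \<in> {g \<in> G. act n g c = c}" using subgroup.m_inv_closed[OF G] a by auto
next
  fix a b assume "a \<in> {g \<in> G. act n g c = c}" "b \<in> {g \<in> G. act n g c = c}"
  then show "a \<otimes>\<^bsub>Ugrp n\<^esub> b \<in> {g \<in> G. act n g c = c}"
    using subgroup.m_closed[OF G] by (auto simp: act_mult)
qed

end

lemma nat_mod_eq_iff_int: "((x::nat) mod n = y mod n) = (int n dvd int x - int y)"
  by (metis mod_eq_dvd_iff of_nat_eq_iff zmod_int)


lemma coprime_pow_lemma:
  fixes p u n l :: nat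
  assumes "prime p" "n = p ^ l" "\<not> p dvd u"
  shows "coprime u n"
proof -
  have "coprime u p" using assms prime_imp_coprime[of p u] by (simp add: coprime_commute)
  then show ?thesis using assms(2) by simp
qed


context
  fixes n :: nat
  assumes n2: "n \<ge> 2"
begin

interpretation U: group "Ugrp n" using U_group[OF n2] .

lemma key:
  assumes G: "subgroup G (Ugrp n)" and p: "prime p" and nl: "n = p ^ l"
    and g0: "g0 \<in> G" and a0p: "fst g0 mod p \<noteq> 1"
  shows "\<exists>c<n. \<forall>g\<in>G. \<exists>h\<in>G. fst h = fst g \<and> act n h c = c"
proof -
  have GU: "\<And>g. g \<in> G \<Longrightarrow> g \<in> carrier (Ugrp n)" using subgroup.subset[OF G] by auto
  obtain a0 b0 where g0e: "g0 = (a0, b0)" by (cases g0)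
  have a0: "a0 < n" "b0 < n" "coprime a0 n" using GU[OF g0] g0e by (auto simp: U_carrier)
  have a01: "a0 \<ge> 1"
  proof (rule ccontr)
    assume "\<not> 1 \<le> a0"
    then have "a0 = 0" by simp
    with a0(3) have "n = 1" by simp
    with n2 show False by simp
  qed
  define u where "u = a0 - 1"
  have "\<not> p dvd u"
  proof
    assume "p dvd u"
    then obtain k where "u = p * k" by blast
    then have "a0 = 1 + k * p" using a01 u_def by (simp add: mult.commute)
    then have "a0 mod p = 1 mod p" by (simp only: mod_mult_self1)
    then have "a0 mod p = 1" using prime_gt_1_nat[OF p] by simp
    then show False using a0p g0e by simp
  qed
  then have cu: "coprime u n" using coprime_pow_lemma p nl by blast
  obtain w where w: "(u * w) mod n = 1" using modinv[OF cu n2] by blast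
  define c0 where "c0 = (w * (n - b0)) mod n"
  have c0n: "c0 < n" using n2 by (simp add: c0_def)
  have E3: "int n dvd (int a0 - 1) * int w - 1"
  proof -
    have "(u * w) mod n = 1 mod n" using w n2 by simp
    then have "int n dvd int (u * w) - int 1" using nat_mod_eq_iff_int by blast
    then show ?thesis using a01 u_def by (simp add: of_nat_diff)
  qed
  have fix0: "act n g0 c0 = c0"
  proof -
    have "int n dvd int (a0 * c0 + b0) - int c0"
    proof -
      have "int c0 mod int n = (int w * (int n - int b0)) mod int n"
        using a0 by (simp add: c0_def zmod_int of_nat_diff)
      then have "int n dvd int c0 - int w * (int n - int b0)" by (simp add: mod_eq_dvd_iff)
      then obtain q where q: "int c0 - int w * (int n - int b0) = int n * q" by (elim dvdE)
      obtain q3 where q3: "(int a0 - 1) * int w - 1 = int n * q3" using E3 by (elim dvdE)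
      have "int a0 * int c0 + int b0 - int c0 = int n * ((int a0 - 1) * q + q3 * (int n - int b0) + 1)"
        using q q3 by algebra
      then show ?thesis by simp
    qed
    then have "(a0 * c0 + b0) mod n = c0 mod n" using nat_mod_eq_iff_int by blast
    then show ?thesis using c0n g0e by (simp add: act_def)
  qed
  have E2: "int n dvd int a0 * int c0 + int b0 - int c0"
  proof -
    have "(a0 * c0 + b0) mod n = c0 mod n" using fix0 c0n g0e by (simp add: act_def)
    then show ?thesis using nat_mod_eq_iff_int by fastforce
  qed
  have "\<forall>g\<in>G. \<exists>h\<in>G. fst h = fst g \<and> act n h c0 = c0"
  proof
    fix g assume g: "g \<in> G"
    have gU: "g \<in> carrier (Ugrp n)" using GU g .
    have g0U: "g0 \<in> carrier (Ugrp n)" using GU g0 .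
    define x where "x = act n g c0"
    have xn: "x < n" using n2 by (simp add: x_def act_def)
    define f where "f = g0 \<otimes>\<^bsub>Ugrp n\<^esub> g \<otimes>\<^bsub>Ugrp n\<^esub> inv\<^bsub>Ugrp n\<^esub> g0 \<otimes>\<^bsub>Ugrp n\<^esub> inv\<^bsub>Ugrp n\<^esub> g"
    have fG: "f \<in> G" unfolding f_def
      using g g0 subgroup.m_closed[OF G] subgroup.m_inv_closed[OF G] by simp
    have fU: "f \<in> carrier (Ugrp n)" using GU fG .
    have ff: "fst f = 1"
    proof -
      have i1: "(fst g0 * fst (inv\<^bsub>Ugrp n\<^esub> g0)) mod n = 1" using inv_fst[OF n2 g0U] .
      have i2: "(fst g * fst (inv\<^bsub>Ugrp n\<^esub> g)) mod n = 1" using inv_fst[OF n2 gU] .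
      have "fst f = (fst g0 * fst g * fst (inv\<^bsub>Ugrp n\<^esub> g0) * fst (inv\<^bsub>Ugrp n\<^esub> g)) mod n"
        unfolding f_def U_mult' by (simp add: mod_mult_left_eq)
      also have "\<dots> = ((fst g0 * fst (inv\<^bsub>Ugrp n\<^esub> g0)) mod n * ((fst g * fst (inv\<^bsub>Ugrp n\<^esub> g)) mod n)) mod n"
        by (simp add: mod_mult_eq algebra_simps)
      also have "\<dots> = 1" using i1 i2 n2 by simp
      finally show ?thesis .
    qed
    define d where "d = snd f"
    have fe: "f = (1, d)" using ff d_def by (cases f) auto
    have dn: "d < n" using fU fe by (simp add: U_carrier)
    have actf: "act n f x = act n g0 x"
    proof -
      have "act n (inv\<^bsub>Ugrp n\<^esub> g) x = c0" unfolding x_def using act_inv[OF n2 gU c0n] .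
      moreover have "act n (inv\<^bsub>Ugrp n\<^esub> g0) c0 = c0" using act_inv[OF n2 g0U c0n] fix0 by simp
      ultimately show ?thesis unfolding f_def by (simp add: act_mult x_def)
    qed
    have E1: "int n dvd int x + int d - (int a0 * int x + int b0)"
    proof -
      have "(x + d) mod n = (a0 * x + b0) mod n" using actf fe g0e by (simp add: act_def)
      then show ?thesis using nat_mod_eq_iff_int by fastforce
    qed
    have pw: "(1, (k * d) mod n) \<in> G" for k
    proof (induction k)
      case 0
      then show ?case using subgroup.one_closed[OF G] n2 by (simp add: U_one)
    next
      case (Suc k)
      have "f \<otimes>\<^bsub>Ugrp n\<^esub> (1, (k * d) mod n) = (1, (Suc k * d) mod n)"
        using fe n2 by (simp add: U_mult) (metis mod_add_right_eq add.commute)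
      then show ?case using subgroup.m_closed[OF G fG Suc] by simp
    qed
    define k where "k = w * (n - 1)"
    define t where "t = (1::nat, (k * d) mod n)"
    define h where "h = t \<otimes>\<^bsub>Ugrp n\<^esub> g"
    have hG: "h \<in> G" unfolding h_def t_def using pw g subgroup.m_closed[OF G] by blast
    have "fst h = fst g" using fst_lt[OF n2 gU] by (simp add: h_def t_def U_mult')
    moreover have "act n h c0 = c0"
    proof -
      have "act n h c0 = (x + k * d) mod n" unfolding h_def act_mult x_def[symmetric]
        by (simp add: t_def act_def mod_add_right_eq)
      moreover have "int n dvd int (x + k * d) - int c0"
      proof -
        obtain q1 where q1: "int x + int d - (int a0 * int x + int b0) = int n * q1" using E1 by (elim dvdE)
        obtain q2 where q2: "int a0 * int c0 + int b0 - int c0 = int n * q2" using E2 by (elim dvdE)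
        obtain q3 where q3: "(int a0 - 1) * int w - 1 = int n * q3" using E3 by (elim dvdE)
        have kk: "int k = int w * int n - int w" using n2 by (simp add: k_def of_nat_diff algebra_simps)
        have "int x + int k * int d - int c0 = int n * (int w * int d - int w * q1 - int w * q2 - q3 * (int x - int c0))"
          using q1 q2 q3 kk by algebra
        then show ?thesis by simp
      qed
      then have "(x + k * d) mod n = c0 mod n" using nat_mod_eq_iff_int by blast
      ultimately show ?thesis using c0n by simp
    qed
    ultimately show "\<exists>h\<in>G. fst h = fst g \<and> act n h c0 = c0" using hG by blast
  qed
  then show ?thesis using c0n by blast
qed

end


context
  fixes n :: nat
  assumes n2: "n \<ge> 2"
begin

interpretation U: group "Ugrp n" using U_group[OF n2] .

lemma P_subgroup:
  assumes p: "prime p" and pn: "p dvd n"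
  shows "subgroup {x \<in> carrier (Ugrp n). fst x mod p = 1} (Ugrp n)"
proof (rule U.subgroupI)
  have p1: "p > 1" using prime_gt_1_nat[OF p] .
  show "{x \<in> carrier (Ugrp n). fst x mod p = 1} \<subseteq> carrier (Ugrp n)" by blast
  have "\<one>\<^bsub>Ugrp n\<^esub> \<in> {x \<in> carrier (Ugrp n). fst x mod p = 1}" using n2 p1 by (simp add: U_one U_carrier)
  then show "{x \<in> carrier (Ugrp n). fst x mod p = 1} \<noteq> {}" by blast
next
  fix a assume a: "a \<in> {x \<in> carrier (Ugrp n). fst x mod p = 1}"
  have p1: "p > 1" using prime_gt_1_nat[OF p] .
  have aU: "a \<in> carrier (Ugrp n)" using a by simp
  have "(fst a * fst (inv\<^bsub>Ugrp n\<^esub> a)) mod n = 1" using inv_fst[OF n2 aU] .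
  then have "(fst a * fst (inv\<^bsub>Ugrp n\<^esub> a)) mod n mod p = 1 mod p" by simp
  then have "(fst a * fst (inv\<^bsub>Ugrp n\<^esub> a)) mod p = 1 mod p" using pn by (simp add: mod_mod_cancel)
  then have "((fst a mod p) * fst (inv\<^bsub>Ugrp n\<^esub> a)) mod p = 1 mod p" by (simp add: mod_mult_left_eq)
  then have "fst (inv\<^bsub>Ugrp n\<^esub> a) mod p = 1" using a p1 by simp
  then show "inv\<^bsub>Ugrp n\<^esub> a \<in> {x \<in> carrier (Ugrp n). fst x mod p = 1}" using aU by simp
next
  fix a b assume a: "a \<in> {x \<in> carrier (Ugrp n). fst x mod p = 1}" and b: "b \<in> {x \<in> carrier (Ugrp n). fst x mod p = 1}"
  have p1: "p > 1" using prime_gt_1_nat[OF p] .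
  have "fst (a \<otimes>\<^bsub>Ugrp n\<^esub> b) mod p = (fst a * fst b) mod p" using pn by (simp add: U_mult' mod_mod_cancel)
  also have "\<dots> = ((fst a mod p) * (fst b mod p)) mod p" by (simp add: mod_mult_eq)
  also have "\<dots> = 1" using a b p1 by simp
  finally show "a \<otimes>\<^bsub>Ugrp n\<^esub> b \<in> {x \<in> carrier (Ugrp n). fst x mod p = 1}" using a b by simp
qed

lemma conj_dvd:
  assumes G: "subgroup G (Ugrp n)" and v: "v < n" and c: "c < n"
    and K: "\<forall>g\<in>G. \<exists>h\<in>G. fst h = fst g \<and> act n h c = c"
  shows "card {g \<in> G. act n g v = v} dvd card {g \<in> G. act n g c = c}"
proof -
  define S where "S = {g \<in> G. act n g v = v}"
  define T where "T = (1::nat, (c + n - v) mod n)"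
  have TU: "T \<in> carrier (Ugrp n)" using n2 by (simp add: T_def U_carrier)
  have GU: "\<And>g. g \<in> G \<Longrightarrow> g \<in> carrier (Ugrp n)" using subgroup.subset[OF G] by auto
  have SU: "S \<subseteq> carrier (Ugrp n)" using GU S_def by auto
  have Tv: "act n T v = c" using v c by (simp add: T_def act_def mod_add_right_eq)
  have Tic: "act n (inv\<^bsub>Ugrp n\<^esub> T) c = v" using act_inv[OF n2 TU v] Tv by simp
  have fT: "fst (inv\<^bsub>Ugrp n\<^esub> T) = 1"
  proof -
    have "(fst T * fst (inv\<^bsub>Ugrp n\<^esub> T)) mod n = 1" using inv_fst[OF n2 TU] .
    moreover have "fst (inv\<^bsub>Ugrp n\<^esub> T) < n" using fst_lt[OF n2] TU by simp
    ultimately show ?thesis by (simp add: T_def)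
  qed
  define cj where "cj = (\<lambda>x. T \<otimes>\<^bsub>Ugrp n\<^esub> x \<otimes>\<^bsub>Ugrp n\<^esub> inv\<^bsub>Ugrp n\<^esub> T)"
  define C where "C = cj ` S"
  have canc: "\<And>z. z \<in> carrier (Ugrp n) \<Longrightarrow> inv\<^bsub>Ugrp n\<^esub> T \<otimes>\<^bsub>Ugrp n\<^esub> (T \<otimes>\<^bsub>Ugrp n\<^esub> z) = z"
    using TU by (simp add: U.m_assoc[symmetric])
  have Ssub: "subgroup S (Ugrp n)" unfolding S_def using stab_subgroup[OF n2 G v] .
  have Csub: "subgroup C (Ugrp n)"
  proof (rule U.subgroupI)
    show "C \<subseteq> carrier (Ugrp n)" using SU TU by (auto simp: C_def cj_def)
    show "C \<noteq> {}" using subgroup.one_closed[OF Ssub] by (auto simp: C_def)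
  next
    fix a assume "a \<in> C"
    then obtain x where x: "x \<in> S" "a = cj x" by (auto simp: C_def)
    have xU: "x \<in> carrier (Ugrp n)" using x SU by auto
    have "inv\<^bsub>Ugrp n\<^esub> a = cj (inv\<^bsub>Ugrp n\<^esub> x)"
      using xU TU by (simp add: x cj_def U.inv_mult_group U.m_assoc)
    then show "inv\<^bsub>Ugrp n\<^esub> a \<in> C" using subgroup.m_inv_closed[OF Ssub x(1)] by (auto simp: C_def)
  next
    fix a b assume "a \<in> C" "b \<in> C"
    then obtain x y where x: "x \<in> S" "a = cj x" and y: "y \<in> S" "b = cj y" by (auto simp: C_def)
    have xU: "x \<in> carrier (Ugrp n)" and yU: "y \<in> carrier (Ugrp n)" using x y SU by auto
    have "a \<otimes>\<^bsub>Ugrp n\<^esub> b = cj (x \<otimes>\<^bsub>Ugrp n\<^esub> y)"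
      using xU yU TU by (simp add: x y cj_def U.m_assoc canc)
    then show "a \<otimes>\<^bsub>Ugrp n\<^esub> b \<in> C" using subgroup.m_closed[OF Ssub x(1) y(1)] by (auto simp: C_def)
  qed
  have Sc: "subgroup {g \<in> G. act n g c = c} (Ugrp n)" using stab_subgroup[OF n2 G c] .
  have CS: "C \<subseteq> {g \<in> G. act n g c = c}"
  proof
    fix a assume "a \<in> C"
    then obtain x where x: "x \<in> S" "a = cj x" by (auto simp: C_def)
    have xU: "x \<in> carrier (Ugrp n)" using x SU by auto
    have aU: "a \<in> carrier (Ugrp n)" using x xU TU by (simp add: cj_def)
    have fa: "fst a = fst x"
      using fT fst_lt[OF n2 xU] by (simp add: x cj_def U_mult' T_def)
    have ac: "act n a c = c"
      using x Tic Tv by (simp add: cj_def act_mult S_def)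
    obtain h where h: "h \<in> G" "fst h = fst x" "act n h c = c" using K x by (auto simp: S_def)
    have hU: "h \<in> carrier (Ugrp n)" using GU h by auto
    have "snd a = snd h"
    proof -
      have "(fst x * c + snd a) mod n = (fst x * c + snd h) mod n"
        using ac h fa by (simp add: act_def)
      then have "int n dvd int (fst x * c + snd a) - int (fst x * c + snd h)" using nat_mod_eq_iff_int by blast
      then have "int n dvd int (snd a) - int (snd h)" by simp
      then have "snd a mod n = snd h mod n" using nat_mod_eq_iff_int by blast
      then show ?thesis using snd_lt[OF n2 aU] snd_lt[OF n2 hU] by simp
    qed
    then have "a = h" using fa h(2) by (simp add: prod_eq_iff)
    then show "a \<in> {g \<in> G. act n g c = c}" using h ac by simp
  qed
  have "inj_on cj S"
  proof (rule inj_onI)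
    fix x y assume xy: "x \<in> S" "y \<in> S" "cj x = cj y"
    then have xU: "x \<in> carrier (Ugrp n)" and yU: "y \<in> carrier (Ugrp n)" using SU by auto
    have "T \<otimes>\<^bsub>Ugrp n\<^esub> x \<otimes>\<^bsub>Ugrp n\<^esub> inv\<^bsub>Ugrp n\<^esub> T = T \<otimes>\<^bsub>Ugrp n\<^esub> y \<otimes>\<^bsub>Ugrp n\<^esub> inv\<^bsub>Ugrp n\<^esub> T"
      using xy(3) by (simp add: cj_def)
    then have "T \<otimes>\<^bsub>Ugrp n\<^esub> x = T \<otimes>\<^bsub>Ugrp n\<^esub> y"
      using U.right_cancel[of "inv\<^bsub>Ugrp n\<^esub> T" "T \<otimes>\<^bsub>Ugrp n\<^esub> x" "T \<otimes>\<^bsub>Ugrp n\<^esub> y"] xU yU TU by simp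
    then show "x = y" using U.Units_l_cancel[of T x y] xU yU TU U.Units_eq by simp
  qed
  then have "card C = card S" by (simp add: C_def card_image)
  moreover have "card C dvd card {g \<in> G. act n g c = c}" using subgroup_dvd[OF n2 Csub Sc CS] .
  ultimately show ?thesis by (simp add: S_def)
qed

end


lemma card_res1:
  fixes p l :: nat
  assumes p: "prime p" and l: "l > 0"
  shows "card {a. a < p ^ l \<and> a mod p = 1} = p ^ (l - 1)"
proof -
  have p1: "p > 1" using prime_gt_1_nat[OF p] .
  have pl: "p ^ l = p * p ^ (l - 1)" using l by (metis Suc_diff_1 power_Suc)
  have "{a. a < p ^ l \<and> a mod p = 1} = (\<lambda>i. p * i + 1) ` {..<p ^ (l - 1)}"
  proof (rule Set.set_eqI, rule iffI)
    fix a assume "a \<in> {a. a < p ^ l \<and> a mod p = 1}"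
    then have a: "a < p ^ l" "a mod p = 1" by auto
    have "a = p * (a div p) + 1" using a(2) by (metis mult_div_mod_eq)
    moreover have "a div p < p ^ (l - 1)" using a(1) pl p1
      by (simp add: div_less_iff_less_mult mult.commute)
    ultimately show "a \<in> (\<lambda>i. p * i + 1) ` {..<p ^ (l - 1)}" by blast
  next
    fix a assume "a \<in> (\<lambda>i. p * i + 1) ` {..<p ^ (l - 1)}"
    then obtain i where i: "i < p ^ (l - 1)" "a = p * i + 1" by auto
    have "p * (i + 1) \<le> p * p ^ (l - 1)" using i(1) by (intro mult_le_mono2) simp
    then have "a < p ^ l" using i(2) pl p1 by simp
    moreover have "a mod p = 1"
    proof -
      have "a = 1 + i * p" using i(2) by (simp add: mult.commute)
      then have "a mod p = 1 mod p" by (simp only: mod_mult_self1)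
      then show ?thesis using p1 by simp
    qed
    ultimately show "a \<in> {a. a < p ^ l \<and> a mod p = 1}" by simp
  qed
  moreover have "inj_on (\<lambda>i. p * i + 1) {..<p ^ (l - 1)}" using p1 by (intro inj_onI) simp
  ultimately show ?thesis by (simp add: card_image)
qed

lemma card_P:
  fixes p l n :: nat
  assumes p: "prime p" and l: "l > 0" and nl: "n = p ^ l"
  shows "card {x \<in> carrier (Ugrp n). fst x mod p = 1} = p ^ (l - 1) * p ^ l"
proof -
  have p1: "p > 1" using prime_gt_1_nat[OF p] .
  have "{x \<in> carrier (Ugrp n). fst x mod p = 1} = {a. a < p ^ l \<and> a mod p = 1} \<times> {..<n}"
  proof (rule Set.set_eqI)
    fix x :: "nat \<times> nat"
    have "fst x mod p = 1 \<Longrightarrow> coprime (fst x) n"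
    proof -
      assume h: "fst x mod p = 1"
      have "coprime (fst x mod p) p" using h by simp
      then have "coprime (fst x) p" using p1 by simp
      then show "coprime (fst x) n" using nl by simp
    qed
    then show "x \<in> {x \<in> carrier (Ugrp n). fst x mod p = 1} \<longleftrightarrow> x \<in> {a. a < p ^ l \<and> a mod p = 1} \<times> {..<n}"
      using nl by (cases x) (auto simp: U_carrier)
  qed
  then show ?thesis using card_res1[OF p l] nl by (simp add: card_cartesian_product)
qed

theorem lemma2p3:
  fixes p l n :: nat and G :: "(nat \<times> nat) set"
  assumes "prime p" and "l > 0" and "n = p ^ l"
    and "subgroup G (Ugrp n)"
    and "v \<in> Sn n"
  shows "lam n G dvd card (Orb n G v)"
proof -
  note p = assms(1) and l = assms(2) and nl = assms(3) and G = assms(4)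
  have p1: "p > 1" using prime_gt_1_nat[OF p] .
  have n2: "n \<ge> 2"
  proof -
    have "p ^ 1 \<le> p ^ l" using l p1 by (intro power_increasing) auto
    then show ?thesis using nl p1 by simp
  qed
  interpret U: group "Ugrp n" using U_group[OF n2] .
  have vn: "v < n" using assms(5) by (simp add: Sn_def)
  have finG: "finite G" using finite_subset[OF subgroup.subset[OF G] finite_U[OF n2]] .
  have cardG: "card G > 0" using finG subgroup.one_closed[OF G] card_gt_0_iff by blast
  have OS: "\<And>w. w < n \<Longrightarrow> card (Orb n G w) * card {g \<in> G. act n g w = w} = card G"
    using orbit_stab[OF n2 G] by blast
  have Opos: "\<And>w. w < n \<Longrightarrow> card (Orb n G w) > 0"
    using OS cardG by (metis gr0I mult_is_0 less_irrefl)
  have Spos: "\<And>w. w < n \<Longrightarrow> card {g \<in> G. act n g w = w} > 0"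
    using OS cardG by (metis gr0I mult_is_0 less_irrefl)
  define F where "F = (\<lambda>w. card (Orb n G w)) ` {0..<n}"
  have lamF: "lam n G = Min F" by (simp add: lam_def F_def Sn_def)
  have finF: "finite F" and neF: "F \<noteq> {}" using n2 by (auto simp: F_def)
  show ?thesis
  proof (cases "\<exists>g0\<in>G. fst g0 mod p \<noteq> 1")
    case True
    then obtain g0 where g0: "g0 \<in> G" "fst g0 mod p \<noteq> 1" by blast
    obtain c where c: "c < n" and K: "\<forall>g\<in>G. \<exists>h\<in>G. fst h = fst g \<and> act n h c = c"
      using key[OF n2 G p nl g0] by blast
    have dv: "card (Orb n G c) dvd card (Orb n G w)" if w: "w < n" for w
    proof -
      obtain m where m: "card {g \<in> G. act n g c = c} = card {g \<in> G. act n g w = w} * m"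
        using conj_dvd[OF n2 G w c K] by (elim dvdE)
      have "card (Orb n G w) * card {g \<in> G. act n g w = w}
          = (card (Orb n G c) * m) * card {g \<in> G. act n g w = w}"
        using OS[OF w] OS[OF c] m by (simp add: algebra_simps)
      then have "card (Orb n G w) = card (Orb n G c) * m" using Spos[OF w] by simp
      then show ?thesis by simp
    qed
    have "Min F = card (Orb n G c)"
    proof (rule Min_eqI[OF finF])
      fix y assume "y \<in> F"
      then obtain w where "w < n" "y = card (Orb n G w)" by (auto simp: F_def)
      then show "card (Orb n G c) \<le> y" using dv Opos by (simp add: dvd_imp_le)
    next
      show "card (Orb n G c) \<in> F" using c by (auto simp: F_def)
    qed
    then show ?thesis using lamF dv[OF vn] by simp
  next
    case False
    then have GP: "G \<subseteq> {x \<in> carrier (Ugrp n). fst x mod p = 1}" using subgroup.subset[OF G] by auto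
    have pn: "p dvd n" using nl l by (simp add: dvd_power)
    have "card G dvd card {x \<in> carrier (Ugrp n). fst x mod p = 1}"
      using subgroup_dvd[OF n2 G P_subgroup[OF n2 p pn] GP] .
    then have cG: "card G dvd p ^ (l - 1 + l)" using card_P[OF p l nl] by (simp add: power_add)
    have pw: "\<exists>i. card (Orb n G w) = p ^ i" if w: "w < n" for w
    proof -
      have "card (Orb n G w) dvd card G" using OS[OF w] by (metis dvd_triv_left)
      then have "card (Orb n G w) dvd p ^ (l - 1 + l)" using cG by (rule dvd_trans)
      then show ?thesis using divides_primepow_nat[OF p] by blast
    qed
    have "Min F \<in> F" using Min_in[OF finF neF] .
    then obtain w0 where w0: "w0 < n" "Min F = card (Orb n G w0)" by (auto simp: F_def)
    obtain i0 where i0: "card (Orb n G w0) = p ^ i0" using pw[OF w0(1)] by blast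
    obtain i where i: "card (Orb n G v) = p ^ i" using pw[OF vn] by blast
    have "Min F \<le> card (Orb n G v)" using Min_le[OF finF] vn by (auto simp: F_def)
    then have "p ^ i0 \<le> p ^ i" using w0 i0 i by simp
    then have "i0 \<le> i" by (rule power_le_imp_le_exp[OF p1])
    then have "p ^ i0 dvd p ^ i" by (rule le_imp_power_dvd)
    then show ?thesis using lamF w0 i0 i by simp
  qed
qed

end
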